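(* Let $\mathcal{T}_R$ be the class of all finite reflexive tournaments. For any finite set $\{O_1,\dots,O_k\}\subseteq\mathcal{T}_R$, the class $\mathrm{Av}(O_1,\dots,O_k)=\{T\in\mathcal{T}_R: O_i\not\preceq T \text{ for all } i\}$, with respect to the homomorphic image ordering $\preceq$, is not well quasi-ordered.
   Context: A reflexive tournament is a digraph $T$ (set with binary relation $E(T)$) in which every loop $(x,x)$ is an edge and, for any two distinct $x,y$, exactly one of $(x,y),(y,x)$ is an edge. A homomorphism maps edges to edges. Homomorphic image ordering: $A\preceq B$ iff there is a surjective homomorphism $B\to A$. Well quasi-ordered means no infinite strictly decreasing sequence and no infinite antichain; tournaments considered up to isomorphism. *)

theory Defs
  imports Main
begin

text \<open>A digraph given by a vertex set (natural numbers as labels; every finite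
  digraph is isomorphic to one of this form) and an edge relation.\<close>
type_synonym digraph = "nat set \<times> (nat \<times> nat) set"

definition verts :: "digraph \<Rightarrow> nat set" where "verts T = fst T"
definition edges :: "digraph \<Rightarrow> (nat \<times> nat) set" where "edges T = snd T"

definition reflexive_tournament :: "digraph \<Rightarrow> bool" where
  "reflexive_tournament T \<longleftrightarrow>
     edges T \<subseteq> verts T \<times> verts T \<and>
     (\<forall>x\<in>verts T. (x, x) \<in> edges T) \<and>
     (\<forall>x\<in>verts T. \<forall>y\<in>verts T. x \<noteq> y \<longrightarrow> ((x, y) \<in> edges T \<longleftrightarrow> (y, x) \<notin> edges T))"

definition finite_reflexive_tournament :: "digraph \<Rightarrow> bool" where
  "finite_reflexive_tournament T \<longleftrightarrow> finite (verts T) \<and> reflexive_tournament T"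

definition is_hom :: "(nat \<Rightarrow> nat) \<Rightarrow> digraph \<Rightarrow> digraph \<Rightarrow> bool" where
  "is_hom f B A \<longleftrightarrow> (\<forall>x\<in>verts B. f x \<in> verts A) \<and>
     (\<forall>x y. (x, y) \<in> edges B \<longrightarrow> (f x, f y) \<in> edges A)"

definition hom_image_le :: "digraph \<Rightarrow> digraph \<Rightarrow> bool" where
  "hom_image_le A B \<longleftrightarrow> (\<exists>f. is_hom f B A \<and> f ` verts B = verts A)"

definition Av :: "digraph set \<Rightarrow> digraph \<Rightarrow> bool" where
  "Av Os T \<longleftrightarrow> finite_reflexive_tournament T \<and> (\<forall>H\<in>Os. \<not> hom_image_le H T)"

definition wqo_hom_class :: "(digraph \<Rightarrow> bool) \<Rightarrow> bool" where
  "wqo_hom_class C \<longleftrightarrow>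
     \<not> (\<exists>g :: nat \<Rightarrow> digraph. (\<forall>i. C (g i)) \<and>
          (\<forall>i. hom_image_le (g (Suc i)) (g i) \<and> \<not> hom_image_le (g i) (g (Suc i)))) \<and>
     \<not> (\<exists>g :: nat \<Rightarrow> digraph. (\<forall>i. C (g i)) \<and>
          (\<forall>i j. i \<noteq> j \<longrightarrow> \<not> hom_image_le (g i) (g j)))"

end

theory Submission
  imports Defs
begin

definition TT :: "nat \<Rightarrow> digraph" where
  "TT n = ({..<n}, {(i,j). i<n \<and> j<n \<and> (i = j \<or> j = Suc i \<or> Suc j < i)})"

lemma TT_verts[simp]: "verts (TT n) = {..<n}" by (simp add: TT_def verts_def)
lemma TT_edges: "(i,j) \<in> edges (TT n) \<longleftrightarrow> i<n \<and> j<n \<and> (i = j \<or> j = Suc i \<or> Suc j < i)"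
  by (simp add: TT_def edges_def)

lemma TT_frt: "finite_reflexive_tournament (TT n)"
  unfolding finite_reflexive_tournament_def reflexive_tournament_def
  by (auto simp: TT_edges)

lemma sep:
  assumes A: "reflexive_tournament A" and h: "is_hom f (TT n) A"
    and xy: "x < n" "y < n" "f x = f y" and v: "v < n"
    and d: "(v = x \<or> x = Suc v \<or> Suc x < v) \<noteq> (v = y \<or> y = Suc v \<or> Suc y < v)"
  shows "f v = f x"
proof (rule ccontr)
  assume ne: "f v \<noteq> f x"
  hence "v \<noteq> x" "v \<noteq> y" using xy by auto
  have fv: "f v \<in> verts A" and fx: "f x \<in> verts A" using h xy v by (auto simp: is_hom_def)
  have tour: "(f v, f x) \<in> edges A \<longleftrightarrow> (f x, f v) \<notin> edges A"
    using A fv fx ne unfolding reflexive_tournament_def by blast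
  show False
  proof (cases "x = Suc v \<or> Suc x < v")
    case True
    hence "(v,x) \<in> edges (TT n)" using xy v by (auto simp: TT_edges)
    hence e1: "(f v, f x) \<in> edges A" using h by (auto simp: is_hom_def)
    have "\<not> (y = Suc v \<or> Suc y < v)" using d True \<open>v \<noteq> x\<close> by auto
    hence "(y,v) \<in> edges (TT n)" using xy v \<open>v \<noteq> y\<close> by (auto simp: TT_edges)
    hence "(f y, f v) \<in> edges A" using h by (auto simp: is_hom_def)
    thus False using e1 tour xy by auto
  next
    case False
    hence "(x,v) \<in> edges (TT n)" using xy v \<open>v \<noteq> x\<close> by (auto simp: TT_edges)
    hence e1: "(f x, f v) \<in> edges A" using h by (auto simp: is_hom_def)
    have "y = Suc v \<or> Suc y < v" using d False \<open>v \<noteq> x\<close> \<open>v \<noteq> y\<close> by auto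
    hence "(v,y) \<in> edges (TT n)" using xy v by (auto simp: TT_edges)
    hence "(f v, f y) \<in> edges A" using h by (auto simp: is_hom_def)
    thus False using e1 tour xy by auto
  qed
qed

lemma const:
  assumes A: "reflexive_tournament A" and h: "is_hom f (TT n)  A"
    and n: "n \<ge> 5" and xy: "x < y" "y < n" "f x = f y"
  shows "\<forall>k<n. f k = f x"
proof -
  have down: "\<And>z. z < y \<Longrightarrow> f z = f y \<Longrightarrow> f 0 = f y"
  proof -
    fix z show "z < y \<Longrightarrow> f z = f y \<Longrightarrow> f 0 = f y"
    proof (induction z)
      case 0 thus ?case by simp
    next
      case (Suc z)
      have "f z = f (Suc z)"
        by (rule sep[OF A h, of "Suc z" y z]) (use Suc.prems xy in auto)
      thus ?case using Suc by auto
    qed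
  qed
  have f0: "f 0 = f x" using down[OF xy(1) xy(3)] xy by simp
  have up: "\<And>k. y \<le> k \<Longrightarrow> k \<le> n - 1 \<Longrightarrow> f k = f x \<longrightarrow> f (n - 1) = f x"
  proof -
    fix k assume yk: "y \<le> k" and kn: "k \<le> n - 1"
    from kn show "f k = f x \<longrightarrow> f (n - 1) = f x"
    proof (induction k rule: inc_induct)
      case base thus ?case by simp
    next
      case (step m)
      show ?case
      proof
        assume fm: "f m = f x"
        have xm: "x < m" using yk step.hyps(1) xy(1) by linarith
        have mn: "Suc m < n" using step.hyps(2) n by linarith
        have "f (Suc m) = f x"
          by (rule sep[OF A h, of x m "Suc m"]) (use xm mn fm in simp_all)
        thus "f (n - 1) = f x" using step.IH by simp
      qed
    qed
  qed
  have fn: "f (n - 1) = f 0" using up[of y] xy f0 by simp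
  have mid: "\<And>v. 1 < v \<Longrightarrow> v < n - 2 \<Longrightarrow> f v = f 0"
    by (rule sep[OF A h, of 0 "n - 1"]) (use fn n in auto)
  have f2: "f 2 = f 0" using mid[of 2] n by simp
  have f12: "f 1 = f 2"
    by (rule sep[OF A h, of 2 "n - 1" 1]) (use fn n f2 in auto)
  have f1: "f 1 = f 0" using f12 f2 by simp
  have f3: "f (n - 3) = f 0" using mid[of "n - 3"] n by simp
  have f4: "f (n - 2) = f 0"
    by (rule sep[OF A h, of 0 "n - 3" "n - 2"]) (use f3 n in auto)
  show ?thesis
  proof (intro allI impI)
    fix k assume "k < n"
    hence "k = 0 \<or> k = 1 \<or> k = n - 2 \<or> k = n - 1 \<or> (1 < k \<and> k < n - 2)" by linarith
    hence "f k = f 0"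
    proof (elim disjE)
      assume "1 < k \<and> k < n - 2" thus ?thesis using mid by blast
    qed (simp_all only: f1 f4 fn)
    thus "f k = f x" using f0 by simp
  qed
qed

lemma card_img:
  assumes A: "reflexive_tournament A" and h: "is_hom f (TT n) A" and n: "n \<ge> 5"
  shows "card (f ` {..<n}) = 1 \<or> card (f ` {..<n}) = n"
proof (cases "inj_on f {..<n}")
  case True thus ?thesis by (simp add: card_image)
next
  case False
  then obtain x y where xy: "x < n" "y < n" "x \<noteq> y" "f x = f y" unfolding inj_on_def by auto
  obtain a b where ab: "a < b" "b < n" "f a = f b"
  proof (cases "x < y")
    case True thus ?thesis using that[of x y] xy by simp
  next
    case False hence "y < x" using xy(3) by simp
    thus ?thesis using that[of y x] xy by simp
  qed
  have c: "\<forall>k<n. f k = f a" using const[OF A h n ab] .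
  have "f ` {..<n} = {f a}" 
  proof
    show "f ` {..<n} \<subseteq> {f a}" using c by blast
    have "a \<in> {..<n}" using ab by simp
    thus "{f a} \<subseteq> f ` {..<n}" by blast
  qed
  thus ?thesis by simp
qed

theorem theorem5p2:
  fixes Os :: "digraph set"
  assumes "finite Os"
    and "\<forall>H\<in>Os. finite_reflexive_tournament H"
    and "\<forall>H\<in>Os. card (verts H) \<noteq> 1"
  shows "\<not> wqo_hom_class (Av Os)"
proof -
  define N where "N = max 5 (Max (insert 0 ((\<lambda>H. card (verts H)) ` Os)) + 1)"
  have bound: "\<And>H. H \<in> Os \<Longrightarrow> card (verts H) < N"
  proof -
    fix H assume "H \<in> Os"
    hence "card (verts H) \<le> Max (insert 0 ((\<lambda>H. card (verts H)) ` Os))"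
      using assms(1) by (intro Max_ge) auto
    thus "card (verts H) < N" unfolding N_def by linarith
  qed
  have N5: "N \<ge> 5" unfolding N_def by simp
  have noimg: "\<And>A m. reflexive_tournament A \<Longrightarrow> m \<ge> 5 \<Longrightarrow> hom_image_le A (TT m) \<Longrightarrow>
      card (verts A) = 1 \<or> card (verts A) = m"
  proof -
    fix A m assume A: "reflexive_tournament A" and m: "m \<ge> 5" and "hom_image_le A (TT m)"
    then obtain f where f: "is_hom f (TT m) A" and im: "f ` verts (TT m) = verts A"
      unfolding hom_image_le_def by blast
    have "card (f ` {..<m}) = 1 \<or> card (f ` {..<m}) = m" using card_img[OF A f m] .
    moreover have "f ` {..<m} = verts A" using im by simp
    ultimately show "card (verts A) = 1 \<or> card (verts A) = m" by simp
  qed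
  define g where "g i = TT (N + i)" for i
  have "\<forall>i. Av Os (g i)"
  proof
    fix i
    show "Av Os (g i)" unfolding Av_def g_def
    proof (intro conjI ballI TT_frt)
      fix H assume H: "H \<in> Os"
      show "\<not> hom_image_le H (TT (N + i))"
      proof
        assume hi: "hom_image_le H (TT (N + i))"
        have rt: "reflexive_tournament H" using assms(2) H
          by (simp add: finite_reflexive_tournament_def)
        have "N + i \<ge> 5" using N5 by simp
        hence "card (verts H) = 1 \<or> card (verts H) = N + i"
          using noimg[OF rt _ hi] by blast
        thus False using assms(3) H bound[OF H] by auto
      qed
    qed
  qed
  moreover have "\<forall>i j. i \<noteq> j \<longrightarrow> \<not> hom_image_le (g i) (g j)"
  proof (intro allI impI notI)
    fix i j assume "i \<noteq> j" "hom_image_le (g i) (g j)"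
    hence hi: "hom_image_le (TT (N + i)) (TT (N + j))" unfolding g_def by simp
    have rt: "reflexive_tournament (TT (N + i))" using TT_frt
      unfolding finite_reflexive_tournament_def by blast
    have "N + j \<ge> 5" using N5 by simp
    hence "card (verts (TT (N + i))) = 1 \<or> card (verts (TT (N + i))) = N + j"
      using noimg[OF rt _ hi] by blast
    hence "card (verts (g i)) = 1 \<or> card (verts (g i)) = N + j" unfolding g_def .
    thus False using \<open>i \<noteq> j\<close> N5 unfolding g_def by auto
  qed
  ultimately show ?thesis unfolding wqo_hom_class_def by blast
qed

end
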